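(* No consistently-dimensioned expression fails because of dimension: for every expression $e$ of a static program and every state $\Gamma$, if $\#(e) \sqsubset \top$ then no configuration $\chi$ with $((e, \emptyset)\ |\ \Gamma) \to^{*} \chi$ fails because of dimension.
   Context: Setting: the core language $\epsilon_0$ (expressions: variables, constants, let-blocks binding bundle components, procedure calls, primitive calls, conditionals, bundles of multiple values, fork, join), evaluated from the initial configuration $(e,\emptyset)\ |\ \Gamma$ (main stack holding $e$ with empty local environment, value stack holding one value separator $|$) by a small-step reduction relation $\to$, with $\to^*$ its reflexive-transitive closure. A configuration fails because of dimension when the value stack does not have the shape required by the contractive rule of the holed expression on top of the main stack: e.g. a let receives a bundle with fewer values than bound variables, a procedure/fork/primitive call or bundle receives a wrong number of one-value bundles, or a conditional/join discriminand is not a one-value bundle. Dimensions live in the flat lattice $\mathbb{N}\cup\{\bot,\top\}$ with $\bot\sqsubset\lfloor n\rfloor\sqsubset\top$; $\#(e)$ is a static inference of the bundle size $e$ evaluates to (variables/constants/fork/join $\lfloor1\rfloor$, bundles of $n$ single-valued items $\lfloor n\rfloor$, primitives their out-dimension, procedure calls the procedure's least-fixpoint out-dimension, let the dimension of its body, conditionals the join of branch dimensions, and $\top$ whenever a side condition such as arity or single-valuedness of sub-expressions fails). An expression is consistently-dimensioned if $\#(e)\sqsubset\top$. Programs considered are static (no self-modification of global or procedure definitions). *)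

theory Defs
  imports Main "HOL-Library.Lattice_Constructions"
begin

type_synonym vname = string
type_synonym pname = string
type_synonym primname = string

datatype val = VInt int | VBool bool | VThread nat

datatype expr =
    EVar vname
  | EConst val
  | ELet "vname list" expr expr      \<comment> \<open>let x1 ... xk = e1 in e2 (binds bundle components)\<close>
  | ECall pname "expr list"
  | EPrim primname "expr list"
  | EIf expr expr expr
  | EBundle "expr list"
  | EFork pname "expr list"
  | EJoin expr

text \<open>A primitive: in-arity, out-dimension, and (partial) semantics giving the i-th output.\<close>
type_synonym primsig = "nat \<times> nat \<times> (val list \<Rightarrow> (nat \<Rightarrow> val) option)"

text \<open>A (static) program: procedure definitions and primitives. Nothing in the
  semantics can modify them, so programs are static by construction.\<close>
record program =
  procs :: "pname \<Rightarrow> (vname list \<times> expr) option"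
  prims :: "primname \<Rightarrow> primsig option"

text \<open>The state Gamma: global definitions (read-only).\<close>
type_synonym state = "vname \<Rightarrow> val option"

type_synonym env = "vname \<Rightarrow> val option"

text \<open>Holed expressions (the continuation part of a compound expression).\<close>
datatype hole =
    LetH "vname list" expr
  | CallH pname nat
  | PrimH primname nat
  | IfH expr expr
  | BundleH nat
  | ForkH pname nat
  | JoinH

text \<open>Main-stack frames: evaluate an expression; push a value separator and then
  evaluate a sub-expression; or a holed expression awaiting its sub-results.\<close>
datatype frame = Ev expr env | Sub expr env | Hole hole env

datatype vitem = Sep | V val

type_synonym thread = "frame list \<times> vitem list"

type_synonym config = "thread \<times> (nat \<Rightarrow> thread option) \<times> state"

text \<open>Pop k one-value bundles from the value stack (arguments returned in order).\<close>
fun pop1 :: "nat \<Rightarrow> vitem list \<Rightarrow> (val list \<times> vitem list) option" where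
  "pop1 0 vs = Some ([], vs)"
| "pop1 (Suc k) (V v # Sep # vs) =
     (case pop1 k vs of Some (as, r) \<Rightarrow> Some (as @ [v], r) | None \<Rightarrow> None)"
| "pop1 (Suc k) _ = None"

text \<open>Pop the topmost bundle (values above the topmost separator, in order).\<close>
fun topb :: "vitem list \<Rightarrow> (val list \<times> vitem list) option" where
  "topb [] = None"
| "topb (Sep # r) = Some ([], r)"
| "topb (V v # r) = (case topb r of Some (ws, r') \<Rightarrow> Some (ws @ [v], r') | None \<Rightarrow> None)"

definition lookup :: "env \<Rightarrow> state \<Rightarrow> vname \<Rightarrow> val option" where
  "lookup \<rho> \<Gamma> x = (case \<rho> x of Some v \<Rightarrow> Some v | None \<Rightarrow> \<Gamma> x)"

inductive tstep :: "program \<Rightarrow> state \<Rightarrow> (nat \<Rightarrow> thread option) \<Rightarrow> thread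
                    \<Rightarrow> thread \<times> (nat \<Rightarrow> thread option) \<Rightarrow> bool"
  for P :: program and \<Gamma> :: state where
  tVar: "lookup \<rho> \<Gamma> x = Some v \<Longrightarrow>
     tstep P \<Gamma> pool (Ev (EVar x) \<rho> # ms, vs) ((ms, V v # vs), pool)"
| tConst: "tstep P \<Gamma> pool (Ev (EConst v) \<rho> # ms, vs) ((ms, V v # vs), pool)"
| tSub: "tstep P \<Gamma> pool (Sub e \<rho> # ms, vs) ((Ev e \<rho> # ms, Sep # vs), pool)"
| tLet: "tstep P \<Gamma> pool (Ev (ELet xs e1 e2) \<rho> # ms, vs)
           ((Sub e1 \<rho> # Hole (LetH xs e2) \<rho> # ms, vs), pool)"
| tLetC: "\<lbrakk> topb vs = Some (ws, r); length xs \<le> length ws \<rbrakk> \<Longrightarrow>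
     tstep P \<Gamma> pool (Hole (LetH xs e2) \<rho> # ms, vs)
       ((Ev e2 (\<rho>(xs [\<mapsto>] take (length xs) ws)) # ms, r), pool)"
| tCall: "tstep P \<Gamma> pool (Ev (ECall f es) \<rho> # ms, vs)
           ((map (\<lambda>e. Sub e \<rho>) es @ Hole (CallH f (length es)) \<rho> # ms, vs), pool)"
| tCallC: "\<lbrakk> procs P f = Some (ps, b); k = length ps; pop1 k vs = Some (as, r) \<rbrakk> \<Longrightarrow>
     tstep P \<Gamma> pool (Hole (CallH f k) \<rho> # ms, vs)
       ((Ev b (Map.empty(ps [\<mapsto>] as)) # ms, r), pool)"
| tPrim: "tstep P \<Gamma> pool (Ev (EPrim p es) \<rho> # ms, vs)
           ((map (\<lambda>e. Sub e \<rho>) es @ Hole (PrimH p (length es)) \<rho> # ms, vs), pool)"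
| tPrimC: "\<lbrakk> prims P p = Some (n, m, F); k = n; pop1 k vs = Some (as, r); F as = Some g \<rbrakk> \<Longrightarrow>
     tstep P \<Gamma> pool (Hole (PrimH p k) \<rho> # ms, vs)
       ((ms, rev (map (\<lambda>i. V (g i)) [0..<m]) @ r), pool)"
| tIf: "tstep P \<Gamma> pool (Ev (EIf c e1 e2) \<rho> # ms, vs)
           ((Sub c \<rho> # Hole (IfH e1 e2) \<rho> # ms, vs), pool)"
| tIfC: "vs = V (VBool bv) # Sep # r \<Longrightarrow>
     tstep P \<Gamma> pool (Hole (IfH e1 e2) \<rho> # ms, vs)
       ((Ev (if bv then e1 else e2) \<rho> # ms, r), pool)"
| tBundle: "tstep P \<Gamma> pool (Ev (EBundle es) \<rho> # ms, vs)
           ((map (\<lambda>e. Sub e \<rho>) es @ Hole (BundleH (length es)) \<rho> # ms, vs), pool)"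
| tBundleC: "pop1 k vs = Some (as, r) \<Longrightarrow>
     tstep P \<Gamma> pool (Hole (BundleH k) \<rho> # ms, vs) ((ms, rev (map V as) @ r), pool)"
| tFork: "tstep P \<Gamma> pool (Ev (EFork f es) \<rho> # ms, vs)
           ((map (\<lambda>e. Sub e \<rho>) es @ Hole (ForkH f (length es)) \<rho> # ms, vs), pool)"
| tForkC: "\<lbrakk> procs P f = Some (ps, b); k = length ps; pop1 k vs = Some (as, r); pool t = None \<rbrakk> \<Longrightarrow>
     tstep P \<Gamma> pool (Hole (ForkH f k) \<rho> # ms, vs)
       ((ms, V (VThread t) # r), pool(t \<mapsto> ([Ev b (Map.empty(ps [\<mapsto>] as))], [Sep])))"
| tJoin: "tstep P \<Gamma> pool (Ev (EJoin e) \<rho> # ms, vs)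
           ((Sub e \<rho> # Hole JoinH \<rho> # ms, vs), pool)"
| tJoinC: "\<lbrakk> vs = V (VThread t) # Sep # r; pool t = Some ([], [V v, Sep]) \<rbrakk> \<Longrightarrow>
     tstep P \<Gamma> pool (Hole JoinH \<rho> # ms, vs) ((ms, V v # r), pool)"

inductive step :: "program \<Rightarrow> config \<Rightarrow> config \<Rightarrow> bool" for P :: program where
  stMain: "tstep P \<Gamma> pool m (m', pool') \<Longrightarrow> step P (m, pool, \<Gamma>) (m', pool', \<Gamma>)"
| stThread: "\<lbrakk> pool t = Some th; tstep P \<Gamma> pool th (th', pool') \<rbrakk> \<Longrightarrow>
     step P (m, pool, \<Gamma>) (m, pool'(t \<mapsto> th'), \<Gamma>)"

definition init_config :: "expr \<Rightarrow> state \<Rightarrow> config" where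
  "init_config e \<Gamma> = (([Ev e Map.empty], [Sep]), Map.empty, \<Gamma>)"

text \<open>The value-stack shape required (as far as dimensions are concerned) by the
  contractive rule of each holed expression.\<close>
fun dim_shape_ok :: "program \<Rightarrow> hole \<Rightarrow> vitem list \<Rightarrow> bool" where
  "dim_shape_ok P (LetH xs e2) vs =
     (\<exists>ws r. topb vs = Some (ws, r) \<and> length xs \<le> length ws)"
| "dim_shape_ok P (CallH f k) vs =
     (case procs P f of Some (ps, b) \<Rightarrow> k = length ps \<and> pop1 k vs \<noteq> None | None \<Rightarrow> True)"
| "dim_shape_ok P (PrimH p k) vs =
     (case prims P p of Some (n, m, F) \<Rightarrow> k = n \<and> pop1 k vs \<noteq> None | None \<Rightarrow> True)"
| "dim_shape_ok P (IfH e1 e2) vs = (pop1 1 vs \<noteq> None)"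
| "dim_shape_ok P (BundleH k) vs = (pop1 k vs \<noteq> None)"
| "dim_shape_ok P (ForkH f k) vs =
     (case procs P f of Some (ps, b) \<Rightarrow> k = length ps \<and> pop1 k vs \<noteq> None | None \<Rightarrow> True)"
| "dim_shape_ok P JoinH vs = (pop1 1 vs \<noteq> None)"

fun thread_fails_dim :: "program \<Rightarrow> thread \<Rightarrow> bool" where
  "thread_fails_dim P (Hole h \<rho> # ms, vs) = (\<not> dim_shape_ok P h vs)"
| "thread_fails_dim P _ = False"

definition fails_dim :: "program \<Rightarrow> config \<Rightarrow> bool" where
  "fails_dim P \<chi> = (case \<chi> of (m, pool, \<Gamma>) \<Rightarrow>
      thread_fails_dim P m \<or> (\<exists>t th. pool t = Some th \<and> thread_fails_dim P th))"

type_synonym dim = "nat flat_complete_lattice"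

abbreviation Fin :: "nat \<Rightarrow> dim" where "Fin n \<equiv> flat_complete_lattice.Value n"
abbreviation DBot :: dim where "DBot \<equiv> flat_complete_lattice.Bot"
abbreviation DTop :: dim where "DTop \<equiv> flat_complete_lattice.Top"

text \<open>Inference relative to an assignment of out-dimensions to procedures.\<close>
fun dimE :: "program \<Rightarrow> (pname \<Rightarrow> dim) \<Rightarrow> expr \<Rightarrow> dim" where
  "dimE P \<pi> (EVar x) = Fin 1"
| "dimE P \<pi> (EConst v) = Fin 1"
| "dimE P \<pi> (ELet xs e1 e2) =
     (case dimE P \<pi> e1 of
        flat_complete_lattice.Value n \<Rightarrow> (if length xs \<le> n then dimE P \<pi> e2 else DTop)
      | flat_complete_lattice.Bot \<Rightarrow> dimE P \<pi> e2
      | flat_complete_lattice.Top \<Rightarrow> DTop)"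
| "dimE P \<pi> (ECall f es) =
     (case procs P f of
        Some (ps, b) \<Rightarrow> (if length es = length ps \<and> (\<forall>d\<in>set (map (dimE P \<pi>) es). d \<le> Fin 1)
                          then \<pi> f else DTop)
      | None \<Rightarrow> DTop)"
| "dimE P \<pi> (EPrim p es) =
     (case prims P p of
        Some (n, m, F) \<Rightarrow> (if length es = n \<and> (\<forall>d\<in>set (map (dimE P \<pi>) es). d \<le> Fin 1)
                            then Fin m else DTop)
      | None \<Rightarrow> DTop)"
| "dimE P \<pi> (EIf c e1 e2) =
     (if dimE P \<pi> c \<le> Fin 1 then sup (dimE P \<pi> e1) (dimE P \<pi> e2) else DTop)"
| "dimE P \<pi> (EBundle es) =
     (if (\<forall>d\<in>set (map (dimE P \<pi>) es). d \<le> Fin 1) then Fin (length es) else DTop)"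
| "dimE P \<pi> (EFork f es) =
     (case procs P f of
        Some (ps, b) \<Rightarrow> (if length es = length ps \<and> (\<forall>d\<in>set (map (dimE P \<pi>) es). d \<le> Fin 1)
                              \<and> \<pi> f \<le> Fin 1
                          then Fin 1 else DTop)
      | None \<Rightarrow> DTop)"
| "dimE P \<pi> (EJoin e) = (if dimE P \<pi> e \<le> Fin 1 then Fin 1 else DTop)"

definition outdims :: "program \<Rightarrow> pname \<Rightarrow> dim" where
  "outdims P = lfp (\<lambda>\<pi> f. case procs P f of Some (ps, b) \<Rightarrow> dimE P \<pi> b | None \<Rightarrow> DBot)"

definition dim :: "program \<Rightarrow> expr \<Rightarrow> dim" where
  "dim P e = dimE P (outdims P) e"

end

theory Submission
  imports Defs
begin

lemma Top_le_iff: "DTop \<le> x \<longleftrightarrow> x = DTop"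
  by (cases x) (simp_all add: less_eq_flat_complete_lattice_def)
lemma le_Fin_iff: "x \<le> Fin a \<longleftrightarrow> x = DBot \<or> x = Fin a"
  by (cases x) (simp_all add: less_eq_flat_complete_lattice_def)
lemma Fin_le_Fin: "Fin a \<le> Fin b \<longleftrightarrow> a = b"
  by (simp add: less_eq_flat_complete_lattice_def)
lemma le_DBot_iff: "x \<le> DBot \<longleftrightarrow> x = DBot"
  by (cases x) (simp_all add: less_eq_flat_complete_lattice_def)
lemma le_DTop: "(x::dim) \<le> DTop"
  by simp

lemma dimE_mono:
  assumes "\<pi> \<le> \<pi>'"
  shows "dimE P \<pi> e \<le> dimE P \<pi>' e"
proof (induction e)
  case (ELet xs e1 e2)
  then show ?case
    by (cases "dimE P \<pi> e1"; cases "dimE P \<pi>' e1")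
       (auto simp: Top_le_iff le_Fin_iff Fin_le_Fin le_DBot_iff)
next
  case (ECall f es)
  have L: "(\<forall>d\<in>set (map (dimE P \<pi>') es). d \<le> Fin 1) \<Longrightarrow> (\<forall>d\<in>set (map (dimE P \<pi>) es). d \<le> Fin 1)"
    using ECall order_trans by fastforce
  show ?case using L le_funD[OF assms, of f]
    by (auto split: option.splits)
next
  case (EPrim p es)
  have L: "(\<forall>d\<in>set (map (dimE P \<pi>') es). d \<le> Fin 1) \<Longrightarrow> (\<forall>d\<in>set (map (dimE P \<pi>) es). d \<le> Fin 1)"
    using EPrim order_trans by fastforce
  show ?case using L
    by (auto split: option.splits)
next
  case (EIf c e1 e2)
  then show ?case using order_trans sup_mono by (auto)
next
  case (EBundle es)
  have L: "(\<forall>d\<in>set (map (dimE P \<pi>') es). d \<le> Fin 1) \<Longrightarrow> (\<forall>d\<in>set (map (dimE P \<pi>) es). d \<le> Fin 1)"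
    using EBundle order_trans by fastforce
  show ?case using L by auto
next
  case (EFork f es)
  have L: "(\<forall>d\<in>set (map (dimE P \<pi>') es). d \<le> Fin 1) \<Longrightarrow> (\<forall>d\<in>set (map (dimE P \<pi>) es). d \<le> Fin 1)"
    using EFork order_trans by fastforce
  show ?case using L le_funD[OF assms, of f] order_trans
    by (auto split: option.splits)
next
  case (EJoin e)
  then show ?case using order_trans by auto
qed auto

lemma outdims_fix:
  assumes "procs P f = Some (ps, b)"
  shows "dimE P (outdims P) b = outdims P f"
proof -
  let ?F = "\<lambda>\<pi> f. case procs P f of Some (ps, b) \<Rightarrow> dimE P \<pi> b | None \<Rightarrow> DBot"
  have "mono ?F"
    by (rule monoI, rule le_funI) (auto split: option.splits intro: dimE_mono)
  then have "outdims P = ?F (outdims P)"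
    unfolding outdims_def by (rule lfp_unfold)
  then show ?thesis using assms by (metis (no_types, lifting) option.simps(5) split_conv)
qed

primrec good :: "program \<Rightarrow> frame list \<Rightarrow> vitem list \<Rightarrow> bool" where
  "good P [] vs = True"
| "good P (fr # ms) vs = (case fr of
     Ev e \<rho> \<Rightarrow> (\<exists>n. dimE P (outdims P) e \<le> Fin n \<and> (\<forall>ws. length ws = n \<longrightarrow> good P ms (map V ws @ vs)))
   | Sub e \<rho> \<Rightarrow> (\<exists>n. dimE P (outdims P) e \<le> Fin n \<and> (\<forall>ws. length ws = n \<longrightarrow> good P ms (map V ws @ Sep # vs)))
   | Hole h \<rho> \<Rightarrow> (case h of
        LetH xs e2 \<Rightarrow> (\<exists>ws r. topb vs = Some (ws, r) \<and> length xs \<le> length ws \<and>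
            (\<exists>n. dimE P (outdims P) e2 \<le> Fin n \<and> (\<forall>ws. length ws = n \<longrightarrow> good P ms (map V ws @ r))))
      | CallH f k \<Rightarrow> (case procs P f of None \<Rightarrow> True | Some (ps, b) \<Rightarrow> k = length ps \<and>
           (\<exists>as r. pop1 k vs = Some (as, r) \<and>
            (\<exists>n. dimE P (outdims P) b \<le> Fin n \<and> (\<forall>ws. length ws = n \<longrightarrow> good P ms (map V ws @ r)))))
      | PrimH p k \<Rightarrow> (case prims P p of None \<Rightarrow> True | Some (n', m, F) \<Rightarrow> k = n' \<and>
           (\<exists>as r. pop1 k vs = Some (as, r) \<and> (\<forall>ws. length ws = m \<longrightarrow> good P ms (map V ws @ r))))
      | IfH e1 e2 \<Rightarrow> (\<exists>v r. vs = V v # Sep # r \<and>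
            (\<exists>n. dimE P (outdims P) e1 \<le> Fin n \<and> (\<forall>ws. length ws = n \<longrightarrow> good P ms (map V ws @ r))) \<and>
            (\<exists>n. dimE P (outdims P) e2 \<le> Fin n \<and> (\<forall>ws. length ws = n \<longrightarrow> good P ms (map V ws @ r))))
      | BundleH k \<Rightarrow> (\<exists>as r. pop1 k vs = Some (as, r) \<and> (\<forall>ws. length ws = k \<longrightarrow> good P ms (map V ws @ r)))
      | ForkH f k \<Rightarrow> (case procs P f of None \<Rightarrow> True | Some (ps, b) \<Rightarrow> k = length ps \<and>
           (\<exists>as r. pop1 k vs = Some (as, r) \<and> (\<forall>w. good P ms (V w # r))) \<and>
           (\<exists>n. dimE P (outdims P) b \<le> Fin n))
      | JoinH \<Rightarrow> (\<exists>v r. vs = V v # Sep # r \<and> (\<forall>w. good P ms (V w # r)))))"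

lemma good_Sub: "good P (Sub e \<rho> # ms) vs = good P (Ev e \<rho> # ms) (Sep # vs)"
  by simp

definition grp :: "val list \<Rightarrow> vitem list" where
  "grp ws = concat (map (\<lambda>w. [V w, Sep]) ws)"

lemma pop1_grp: "pop1 (length ws) (grp ws @ vs) = Some (rev ws, vs)"
  by (induction ws) (auto simp: grp_def)

lemma pop1_len: "pop1 k vs = Some (as, r) \<Longrightarrow> length as = k"
  by (induction k vs arbitrary: as r rule: pop1.induct) (auto split: option.splits)

lemma topb_map: "topb (map V ws @ Sep # vs) = Some (rev ws, vs)"
  by (induction ws) auto

lemma pop1_one: "pop1 1 vs \<noteq> None \<longleftrightarrow> (\<exists>v r. vs = V v # Sep # r)"
  by (cases vs rule: pop1.cases[of "(1, vs)" for vs]) (auto split: option.splits)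

lemma args_good:
  assumes "\<forall>e\<in>set es. dimE P (outdims P) e \<le> Fin 1"
    and "\<forall>ws. length ws = length es \<longrightarrow> good P rest (grp ws @ vs)"
  shows "good P (map (\<lambda>e. Sub e \<rho>) es @ rest) vs"
  using assms
proof (induction es arbitrary: vs)
  case Nil
  then show ?case by (simp add: grp_def)
next
  case (Cons e es)
  show ?case
  proof (simp, intro exI[of _ 1] conjI allI impI)
    show "dimE P (outdims P) e \<le> Fin 1" using Cons.prems by simp
    fix ws :: "val list" assume "length ws = 1"
    then obtain w where w: "ws = [w]" by (cases ws) auto
    have "good P (map (\<lambda>e. Sub e \<rho>) es @ rest) (V w # Sep # vs)"
    proof (rule Cons.IH)
      show "\<forall>e\<in>set es. dimE P (outdims P) e \<le> Fin 1" using Cons.prems by simp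
      show "\<forall>ws. length ws = length es \<longrightarrow> good P rest (grp ws @ V w # Sep # vs)"
      proof (intro allI impI)
        fix ws' :: "val list" assume "length ws' = length es"
        then have "good P rest (grp (ws' @ [w]) @ vs)" using Cons.prems by simp
        then show "good P rest (grp ws' @ V w # Sep # vs)" by (simp add: grp_def)
      qed
    qed
    then show "good P (map (\<lambda>e. Sub e \<rho>) es @ rest) (map V ws @ Sep # vs)" using w by simp
  qed
qed

fun goodT :: "program \<Rightarrow> thread \<Rightarrow> bool" where
  "goodT P (ms, vs) = good P ms vs"

lemma tstep_good:
  assumes "tstep P \<Gamma> pool th res" "goodT P th"
    and "\<forall>t th. pool t = Some th \<longrightarrow> goodT P th"
  shows "goodT P (fst res) \<and> (\<forall>t th. snd res t = Some th \<longrightarrow> goodT P th)"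
  using assms
proof (induction rule: tstep.induct)
  case (tVar \<rho> x v pool ms vs)
  then obtain n where "Fin 1 \<le> Fin n" and k: "\<forall>ws. length ws = n \<longrightarrow> good P ms (map V ws @ vs)" by auto
  then have "n = 1" by (simp add: Fin_le_Fin)
  then have "good P ms (map V [v] @ vs)" using k by (intro k[rule_format]) simp
  then show ?case using tVar by simp
next
  case (tConst pool v \<rho> ms vs)
  then obtain n where "Fin 1 \<le> Fin n" and k: "\<forall>ws. length ws = n \<longrightarrow> good P ms (map V ws @ vs)" by auto
  then have "n = 1" by (simp add: Fin_le_Fin)
  then have "good P ms (map V [v] @ vs)" using k by (intro k[rule_format]) simp
  then show ?case using tConst by simp
next
  case (tSub pool e \<rho> ms vs)
  then show ?case by simp
next
  case (tLet pool xs e1 e2 \<rho> ms vs)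
  then obtain n where n: "dimE P (outdims P) (ELet xs e1 e2) \<le> Fin n"
     and k: "\<forall>ws. length ws = n \<longrightarrow> good P ms (map V ws @ vs)" by auto
  have "good P (Sub e1 \<rho> # Hole (LetH xs e2) \<rho> # ms) vs"
  proof (cases "dimE P (outdims P) e1")
    case (Value m)
    then have "length xs \<le> m" "dimE P (outdims P) e2 \<le> Fin n" using n by (auto simp: Top_le_iff split: if_splits)
    then show ?thesis using Value k by (auto simp: topb_map)
  next
    case Bot
    then have "dimE P (outdims P) e2 \<le> Fin n" using n by simp
    then have "\<forall>ws. length ws = length xs \<longrightarrow> good P (Hole (LetH xs e2) \<rho> # ms) (map V ws @ Sep # vs)"
      using k by (auto simp: topb_map)
    then show ?thesis using Bot by (simp only: good_Sub) (auto intro!: exI[of _ "length xs"])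
  next
    case Top
    then show ?thesis using n by (simp add: Top_le_iff)
  qed
  then show ?case using tLet by simp
next
  case (tLetC vs ws r xs pool e2 \<rho> ms)
  then show ?case by auto
next
  case (tCall pool f es \<rho> ms vs)
  then obtain n where n: "dimE P (outdims P) (ECall f es) \<le> Fin n"
     and k: "\<forall>ws. length ws = n \<longrightarrow> good P ms (map V ws @ vs)" by auto
  obtain ps b where pb: "procs P f = Some (ps, b)" using n
    by (cases "procs P f") (auto simp: Top_le_iff)
  have c: "length es = length ps" "\<forall>e\<in>set es. dimE P (outdims P) e \<le> Fin 1"
    "outdims P f \<le> Fin n"
    using n pb by (auto simp: Top_le_iff split: if_splits)
  have "good P (map (\<lambda>e. Sub e \<rho>) es @ Hole (CallH f (length es)) \<rho> # ms) vs"
  proof (rule args_good[OF c(2)], intro allI impI)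
    fix ws :: "val list" assume l: "length ws = length es"
    have "pop1 (length es) (grp ws @ vs) = Some (rev ws, vs)" using pop1_grp[of ws vs] l by simp
    then show "good P (Hole (CallH f (length es)) \<rho> # ms) (grp ws @ vs)"
      using pb c k outdims_fix[OF pb] by auto
  qed
  then show ?case using tCall by simp
next
  case (tCallC f ps b k vs as r pool \<rho> ms)
  then show ?case by auto
next
  case (tPrim pool p es \<rho> ms vs)
  then obtain n where n: "dimE P (outdims P) (EPrim p es) \<le> Fin n"
     and k: "\<forall>ws. length ws = n \<longrightarrow> good P ms (map V ws @ vs)" by auto
  obtain a m F where pb: "prims P p = Some (a, m, F)" using n
    by (cases "prims P p") (auto simp: Top_le_iff)
  have c: "length es = a" "\<forall>e\<in>set es. dimE P (outdims P) e \<le> Fin 1" "m = n"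
    using n pb by (auto simp: Top_le_iff Fin_le_Fin split: if_splits)
  have "good P (map (\<lambda>e. Sub e \<rho>) es @ Hole (PrimH p (length es)) \<rho> # ms) vs"
  proof (rule args_good[OF c(2)], intro allI impI)
    fix ws :: "val list" assume l: "length ws = length es"
    have "pop1 (length es) (grp ws @ vs) = Some (rev ws, vs)" using pop1_grp[of ws vs] l by simp
    then show "good P (Hole (PrimH p (length es)) \<rho> # ms) (grp ws @ vs)"
      using pb c k by auto
  qed
  then show ?case using tPrim by simp
next
  case (tPrimC p n m F k vs as r g pool \<rho> ms)
  have e: "rev (map (\<lambda>i. V (g i)) [0..<m]) = map V (rev (map g [0..<m]))" by (simp add: rev_map)
  show ?case using tPrimC by (auto simp: e)
next
  case (tIf pool c e1 e2 \<rho> ms vs)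
  then obtain n where n: "dimE P (outdims P) (EIf c e1 e2) \<le> Fin n"
     and k: "\<forall>ws. length ws = n \<longrightarrow> good P ms (map V ws @ vs)" by auto
  have c: "dimE P (outdims P) c \<le> Fin 1" "dimE P (outdims P) e1 \<le> Fin n" "dimE P (outdims P) e2 \<le> Fin n"
    using n by (auto simp: Top_le_iff split: if_splits)
  have "good P (Sub c \<rho> # Hole (IfH e1 e2) \<rho> # ms) vs"
  proof (simp, intro exI[of _ 1] conjI allI impI)
    show "dimE P (outdims P) c \<le> Fin 1" by (rule c)
    fix ws :: "val list" assume "length ws = 1"
    then obtain w where w: "ws = [w]" by (cases ws) auto
    show "\<exists>v r. map V ws @ Sep # vs = V v # Sep # r \<and>
          (\<exists>n. dimE P (outdims P) e1 \<le> Fin n \<and> (\<forall>ws. length ws = n \<longrightarrow> good P ms (map V ws @ r))) \<and>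
          (\<exists>n. dimE P (outdims P) e2 \<le> Fin n \<and> (\<forall>ws. length ws = n \<longrightarrow> good P ms (map V ws @ r)))"
      using w c k by simp blast
  qed
  then show ?case using tIf by simp
next
  case (tIfC vs bv r pool e1 e2 \<rho> ms)
  then show ?case by auto
next
  case (tBundle pool es \<rho> ms vs)
  then obtain n where n: "dimE P (outdims P) (EBundle es) \<le> Fin n"
     and k: "\<forall>ws. length ws = n \<longrightarrow> good P ms (map V ws @ vs)" by auto
  have c: "\<forall>e\<in>set es. dimE P (outdims P) e \<le> Fin 1" "length es = n"
    using n by (auto simp: Top_le_iff Fin_le_Fin split: if_splits)
  have "good P (map (\<lambda>e. Sub e \<rho>) es @ Hole (BundleH (length es)) \<rho> # ms) vs"
  proof (rule args_good[OF c(1)], intro allI impI)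
    fix ws :: "val list" assume l: "length ws = length es"
    have "pop1 (length es) (grp ws @ vs) = Some (rev ws, vs)" using pop1_grp[of ws vs] l by simp
    then show "good P (Hole (BundleH (length es)) \<rho> # ms) (grp ws @ vs)"
      using c k by auto
  qed
  then show ?case using tBundle by simp
next
  case (tBundleC k vs as r pool \<rho> ms)
  have "length as = k" using pop1_len[OF tBundleC(1)] .
  then show ?case using tBundleC by (auto simp: rev_map)
next
  case (tFork pool f es \<rho> ms vs)
  then obtain n where n: "dimE P (outdims P) (EFork f es) \<le> Fin n"
     and k: "\<forall>ws. length ws = n \<longrightarrow> good P ms (map V ws @ vs)" by auto
  obtain ps b where pb: "procs P f = Some (ps, b)" using n
    by (cases "procs P f") (auto simp: Top_le_iff)
  have c: "length es = length ps" "\<forall>e\<in>set es. dimE P (outdims P) e \<le> Fin 1"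
    "outdims P f \<le> Fin 1" "n = 1"
    using n pb by (auto simp: Top_le_iff Fin_le_Fin split: if_splits)
  have k1: "\<forall>w. good P ms (V w # vs)" proof
    fix w show "good P ms (V w # vs)" using k[rule_format, of "[w]"] c(4) by simp
  qed
  have "good P (map (\<lambda>e. Sub e \<rho>) es @ Hole (ForkH f (length es)) \<rho> # ms) vs"
  proof (rule args_good[OF c(2)], intro allI impI)
    fix ws :: "val list" assume l: "length ws = length es"
    have "pop1 (length es) (grp ws @ vs) = Some (rev ws, vs)" using pop1_grp[of ws vs] l by simp
    then show "good P (Hole (ForkH f (length es)) \<rho> # ms) (grp ws @ vs)"
      using pb c k1 outdims_fix[OF pb] by auto
  qed
  then show ?case using tFork by simp
next
  case (tForkC f ps b k vs as r pool t \<rho> ms)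
  have g1: "good P ms (V (VThread t) # r)" using tForkC by auto
  have g2: "good P [Ev b (Map.empty(ps [\<mapsto>] as))] [Sep]" using tForkC by auto
  have pl: "\<forall>t th. pool t = Some th \<longrightarrow> goodT P th" by (rule tForkC.prems(2))
  show ?case using g1 g2 pl by auto
next
  case (tJoin pool e \<rho> ms vs)
  then obtain n where n: "dimE P (outdims P) (EJoin e) \<le> Fin n"
     and k: "\<forall>ws. length ws = n \<longrightarrow> good P ms (map V ws @ vs)" by auto
  have c: "dimE P (outdims P) e \<le> Fin 1" "n = 1"
    using n by (auto simp: Top_le_iff Fin_le_Fin split: if_splits)
  have k1: "\<forall>w. good P ms (V w # vs)" proof
    fix w show "good P ms (V w # vs)" using k[rule_format, of "[w]"] c(2) by simp
  qed
  have "good P (Sub e \<rho> # Hole JoinH \<rho> # ms) vs"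
  proof (simp, intro exI[of _ 1] conjI allI impI)
    show "dimE P (outdims P) e \<le> Fin 1" by (rule c)
    fix ws :: "val list" assume "length ws = 1"
    then obtain w where w: "ws = [w]" by (cases ws) auto
    show "\<exists>v r. map V ws @ Sep # vs = V v # Sep # r \<and> (\<forall>w. good P ms (V w # r))"
      using w k1 by simp
  qed
  then show ?case using tJoin by simp
next
  case (tJoinC vs t r pool v \<rho> ms)
  then show ?case by auto
qed

definition invc :: "program \<Rightarrow> config \<Rightarrow> bool" where
  "invc P \<chi> = (case \<chi> of (m, pool, \<Gamma>) \<Rightarrow> goodT P m \<and> (\<forall>t th. pool t = Some th \<longrightarrow> goodT P th))"

lemma step_inv:
  assumes "step P \<chi> \<chi>'" "invc P \<chi>"
  shows "invc P \<chi>'"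
  using assms
proof (induction rule: step.induct)
  case (stMain \<Gamma> pool m m' pool')
  then show ?case using tstep_good[of P \<Gamma> pool m "(m', pool')"] by (auto simp: invc_def)
next
  case (stThread pool t th \<Gamma> th' pool' m)
  then have "goodT P th" by (cases th) (auto simp: invc_def)
  then show ?case using stThread tstep_good[of P \<Gamma> pool th "(th', pool')"] by (auto simp: invc_def)
qed

lemma good_nofail: "goodT P th \<Longrightarrow> \<not> thread_fails_dim P th"
proof (cases th)
  case (Pair ms vs)
  assume g: "goodT P th"
  show ?thesis
  proof (cases ms)
    case (Cons fr ms')
    show ?thesis
    proof (cases fr)
      case (Hole h \<rho>)
      show ?thesis using g Pair Cons Hole
        by (cases h) (auto simp: pop1_one split: option.splits)
    qed (use Pair Cons in auto)
  qed (use Pair in auto)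
qed

lemma init_inv: "dim P e < DTop \<Longrightarrow> invc P (init_config e \<Gamma>)"
proof -
  assume d: "dim P e < DTop"
  have "\<exists>n. dimE P (outdims P) e \<le> Fin n"
  proof (cases "dimE P (outdims P) e")
    case (Value n) then show ?thesis by auto
  next
    case Bot then show ?thesis by auto
  next
    case Top then show ?thesis using d by (simp add: dim_def)
  qed
  then show ?thesis by (auto simp: invc_def init_config_def)
qed

theorem mainTheorem8:
  fixes P :: program and e :: expr and \<Gamma> :: state and \<chi> :: config
  assumes "dim P e < DTop"
    and "(step P)\<^sup>*\<^sup>* (init_config e \<Gamma>) \<chi>"
  shows "\<not> fails_dim P \<chi>"
proof -
  have "invc P \<chi>" using assms(2) init_inv[OF assms(1)]
    by (induction rule: rtranclp_induct) (auto intro: step_inv)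
  then show ?thesis using good_nofail
    by (auto simp: invc_def fails_dim_def split: prod.splits)
qed

end
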